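(* Let $D$ be a square-free integer, $p$ an odd prime, $k,\ell$ positive integers and $c_D$ a positive integer with $\gcd(c_D k, p) = 1$. Let $N = c_D k p^{\ell} - 1$ be an odd prime with $\left(\frac{D}{N}\right) = -1$, and let $w \in \mathcal{G}_N(D)$. Then one of the following holds: (i) $w^{c_D k} \equiv 1 \pmod{N}$; (ii) there exists an integer $j$ with $0 \le j < \ell$ such that $\Phi_p\bigl(w^{c_D k p^j}\bigr) \equiv 0 \pmod{N}$, where $\Phi_p$ is the $p$-th cyclotomic polynomial.
   Context: For an integer $n \ge 2$ and a square-free integer $D$: if $D \equiv 2,3 \pmod 4$, let $\mathcal{I}_n(D) = \{a + b\sqrt{D} : a,b \in \mathbb{Z}/n\mathbb{Z}\}$ (the ring $\mathbb{Z}[\sqrt D]/n\mathbb{Z}[\sqrt D]$) and $\mathcal{G}_n(D) = \{a + b\sqrt{D} \in \mathcal{I}_n(D) : a^2 - Db^2 \equiv 1 \pmod n\}$; if $D \equiv 1 \pmod 4$, let $\omega = \frac{1+\sqrt D}{2}$, $\mathcal{I}_n(D) = \{a + b\omega : a,b \in \mathbb{Z}/n\mathbb{Z}\}$ (the ring $\mathbb{Z}[\omega]/n\mathbb{Z}[\omega]$) and $\mathcal{G}_n(D) = \{a + b\omega \in \mathcal{I}_n(D) : a^2 + ab + \frac{1-D}{4} b^2 \equiv 1 \pmod n\}$. Powers are computed in $\mathcal{I}_n(D)$, a congruence $x \equiv y \pmod n$ for $x,y \in \mathcal{I}_n(D)$ means equality in $\mathcal{I}_n(D)$, and polynomials are evaluated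 in $\mathcal{I}_n(D)$. *)

theory Defs
  imports "HOL-Number_Theory.Number_Theory" "HOL-Computational_Algebra.Computational_Algebra"
    "HOL-Analysis.Analysis"
begin

text \<open>Elements a + b*sqrt D (D mod 4 \<noteq> 1) resp. a + b*omega, omega = (1+sqrt D)/2
  (D mod 4 = 1), of I_n(D), represented by pairs (a,b) of integers reduced mod n.\<close>

definition qnorm_red :: "int \<Rightarrow> int \<times> int \<Rightarrow> int \<times> int" where
  "qnorm_red n x = (fst x mod n, snd x mod n)"

definition qmul :: "int \<Rightarrow> int \<Rightarrow> int \<times> int \<Rightarrow> int \<times> int \<Rightarrow> int \<times> int" where
  "qmul n D x y = (case x of (a, b) \<Rightarrow> case y of (c, d) \<Rightarrow>
     (if D mod 4 = 1
      then qnorm_red n (a * c + b * d * ((D - 1) div 4), a * d + b * c + b * d)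
      else qnorm_red n (a * c + D * b * d, a * d + b * c)))"

definition qone :: "int \<Rightarrow> int \<times> int" where
  "qone n = qnorm_red n (1, 0)"

fun qpow :: "int \<Rightarrow> int \<Rightarrow> int \<times> int \<Rightarrow> nat \<Rightarrow> int \<times> int" where
  "qpow n D x 0 = qone n"
| "qpow n D x (Suc m) = qmul n D x (qpow n D x m)"

definition qadd :: "int \<Rightarrow> int \<times> int \<Rightarrow> int \<times> int \<Rightarrow> int \<times> int" where
  "qadd n x y = qnorm_red n (fst x + fst y, snd x + snd y)"

definition qsmult :: "int \<Rightarrow> int \<Rightarrow> int \<times> int \<Rightarrow> int \<times> int" where
  "qsmult n c x = qnorm_red n (c * fst x, c * snd x)"

definition qpoly_eval :: "int \<Rightarrow> int \<Rightarrow> int poly \<Rightarrow> int \<times> int \<Rightarrow> int \<times> int" where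
  "qpoly_eval n D f x =
     foldr (qadd n) (map (\<lambda>i. qsmult n (coeff f i) (qpow n D x i)) [0..<Suc (degree f)])
       (qnorm_red n (0, 0))"

definition qG :: "int \<Rightarrow> int \<Rightarrow> (int \<times> int) set" where
  "qG n D = {(a, b). 0 \<le> a \<and> a < n \<and> 0 \<le> b \<and> b < n \<and>
     (if D mod 4 = 1 then [a^2 + a * b + ((1 - D) div 4) * b^2 = 1] (mod n)
      else [a^2 - D * b^2 = 1] (mod n))}"

definition cyclotomic :: "nat \<Rightarrow> int poly" where
  "cyclotomic n = (THE q. map_poly of_int q =
     (\<Prod>k\<in>{k\<in>{1..n}. coprime k n}. [: - cis (2 * pi * real k / real n), 1 :]))"

end

theory Submission
  imports Defs
begin


lemma frob_ex:
  fixes x y :: "'a::comm_ring_1"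
  assumes "prime n"
  shows "\<exists>r. (x + y) ^ n = x ^ n + y ^ n + of_nat n * r"
proof -
  have n0: "n > 0" using assms prime_gt_0_nat by blast
  have "(x + y) ^ n = (\<Sum>k\<le>n. of_nat (n choose k) * x ^ k * y ^ (n - k))"
    by (rule binomial_ring)
  also have "{..n} = insert 0 (insert n {1..<n})" using n0 by auto
  also have "(\<Sum>k\<in>insert 0 (insert n {1..<n}). of_nat (n choose k) * x ^ k * y ^ (n - k))
     = y ^ n + x ^ n + (\<Sum>k\<in>{1..<n}. of_nat (n choose k) * x ^ k * y ^ (n - k))"
    using n0 by (simp add: sum.insert)
  also have "(\<Sum>k\<in>{1..<n}. of_nat (n choose k) * x ^ k * y ^ (n - k))
     = of_nat n * (\<Sum>k\<in>{1..<n}. of_nat ((n choose k) div n) * x ^ k * y ^ (n - k))"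
  proof -
    have "\<And>k. k \<in> {1..<n} \<Longrightarrow> of_nat (n choose k) * x ^ k * y ^ (n - k)
        = (of_nat n :: 'a) * (of_nat ((n choose k) div n) * x ^ k * y ^ (n - k))"
    proof -
      fix k assume k: "k \<in> {1..<n}"
      have "n dvd (n choose k)" using dvd_choose_prime[of k n] assms k by auto
      then have "n choose k = n * ((n choose k) div n)" by simp
      then have "(of_nat (n choose k) :: 'a) = of_nat n * of_nat ((n choose k) div n)"
        by (metis of_nat_mult)
      then show "of_nat (n choose k) * x ^ k * y ^ (n - k)
        = (of_nat n :: 'a) * (of_nat ((n choose k) div n) * x ^ k * y ^ (n - k))"
        by (simp add: mult.assoc)
    qed
    then show ?thesis by (simp add: sum_distrib_left)
  qed
  finally show ?thesis by (auto simp: add_ac)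
qed

lemma fermat_nat_int:
  assumes "prime n"
  shows "(int n) dvd (int m) ^ n - int m"
proof (induction m)
  case 0 then show ?case using assms by (simp add: prime_gt_0_nat power_0_left)
next
  case (Suc m)
  obtain r where r: "(int m + 1) ^ n = int m ^ n + 1 ^ n + of_nat n * r"
    using frob_ex[OF assms, of "int m" 1] by blast
  have "int (Suc m) ^ n - int (Suc m) = (int m ^ n - int m) + int n * r" using r by (simp add: add.commute)
  then show ?case using Suc by (metis dvd_add dvd_triv_left)
qed

lemma fermat_int:
  assumes "prime n" "odd n"
  shows "(int n) dvd a ^ n - a"
proof (cases "a \<ge> 0")
  case True
  then obtain m where "a = int m" by (metis nonneg_int_cases)
  then show ?thesis using fermat_nat_int[OF assms(1)] by simp
next
  case False
  then obtain m where m: "a = - int m" by (metis linorder_linear neg_int_cases le_refl minus_minus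
     nonneg_int_cases neg_0_le_iff_le)
  have "a ^ n - a = - (int m ^ n - int m)" using m assms(2) by (simp add: power_minus_odd)
  then show ?thesis using fermat_nat_int[OF assms(1), of m] by (metis dvd_minus_iff)
qed



definition cg :: "int \<Rightarrow> int poly \<Rightarrow> int poly \<Rightarrow> int poly \<Rightarrow> bool" where
  "cg n F P Q \<longleftrightarrow> (\<exists>A B. P - Q = smult n A + F * B)"

lemma cg_refl[simp]: "cg n F P P"
  unfolding cg_def by (rule exI[of _ 0], rule exI[of _ 0]) simp

lemma cg_sym: "cg n F P Q \<Longrightarrow> cg n F Q P"
  unfolding cg_def by (metis (no_types, lifting) minus_diff_eq minus_add_distrib mult_minus_right smult_minus_right)

lemma cg_trans: "cg n F P Q \<Longrightarrow> cg n F Q R \<Longrightarrow> cg n F P R"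
proof -
  assume "cg n F P Q" "cg n F Q R"
  then obtain A1 B1 A2 B2 where "P - Q = smult n A1 + F * B1" "Q - R = smult n A2 + F * B2"
    unfolding cg_def by blast
  then have "P - R = smult n (A1 + A2) + F * (B1 + B2)"
    by (simp add: algebra_simps smult_add_right)
  then show ?thesis unfolding cg_def by blast
qed

lemma cg_add: "cg n F P Q \<Longrightarrow> cg n F R S \<Longrightarrow> cg n F (P + R) (Q + S)"
proof -
  assume "cg n F P Q" "cg n F R S"
  then obtain A1 B1 A2 B2 where "P - Q = smult n A1 + F * B1" "R - S = smult n A2 + F * B2"
    unfolding cg_def by blast
  then have "P + R - (Q + S) = smult n (A1 + A2) + F * (B1 + B2)"
    by (simp add: algebra_simps smult_add_right)
  then show ?thesis unfolding cg_def by blast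
qed

lemma cg_minus: "cg n F P Q \<Longrightarrow> cg n F (- P) (- Q)"
proof -
  assume "cg n F P Q"
  then obtain A1 B1 where "P - Q = smult n A1 + F * B1"
    unfolding cg_def by blast
  then have "- P - (- Q) = smult n (- A1) + F * (- B1)"
    by (simp add: algebra_simps)
  then show ?thesis unfolding cg_def by blast
qed

lemma cg_diff: "cg n F P Q \<Longrightarrow> cg n F R S \<Longrightarrow> cg n F (P - R) (Q - S)"
  using cg_add[of n F P Q "-R" "-S"] cg_minus[of n F R S] by simp

lemma cg_mult: "cg n F P Q \<Longrightarrow> cg n F R S \<Longrightarrow> cg n F (P * R) (Q * S)"
proof -
  assume "cg n F P Q" "cg n F R S"
  then obtain A1 B1 A2 B2 where h: "P - Q = smult n A1 + F * B1" "R - S = smult n A2 + F * B2"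
    unfolding cg_def by blast
  have "P * R - Q * S = P * (R - S) + (P - Q) * S" by (simp add: algebra_simps)
  also have "\<dots> = smult n (P * A2 + A1 * S) + F * (P * B2 + B1 * S)"
    unfolding h by (simp add: algebra_simps smult_add_right)
  finally show ?thesis unfolding cg_def by blast
qed

lemma cg_pow: "cg n F P Q \<Longrightarrow> cg n F (P ^ m) (Q ^ m)"
  by (induction m) (auto intro: cg_mult)

lemma cg_smult_n: "cg n F (smult n A) 0"
  unfolding cg_def by (rule exI[of _ A], rule exI[of _ 0]) simp

lemma cg_F: "cg n F (F * B) 0"
  unfolding cg_def by (rule exI[of _ 0], rule exI[of _ B]) simp

lemma cg_iff0: "cg n F P Q \<longleftrightarrow> cg n F (P - Q) 0"
  unfolding cg_def by simp

lemma cg_sum: "(\<And>i. i \<in> I \<Longrightarrow> cg n F (f i) (g i)) \<Longrightarrow> cg n F (sum f I) (sum g I)"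
  by (induction I rule: infinite_finite_induct) (auto intro: cg_add)

definition Fp :: "int \<Rightarrow> int poly" where
  "Fp D = (if D mod 4 = 1 then [:-((D - 1) div 4), -1, 1:] else [:-D, 0, 1:])"

definition phi :: "int \<times> int \<Rightarrow> int poly" where
  "phi x = [:fst x, snd x:]"

lemma mod_minus_eq_mult: "(z::int) mod n - z = n * (- (z div n))"
  using div_mult_mod_eq[of z n] by (simp add: algebra_simps)

lemma phi_red: "cg n F (phi (qnorm_red n x)) (phi x)"
proof -
  obtain a b where x: "x = (a, b)" by force
  have "phi (qnorm_red n x) - phi x = smult n [:- (a div n), - (b div n):]"
    unfolding x phi_def qnorm_red_def
    using mod_minus_eq_mult[of a n] mod_minus_eq_mult[of b n] by simp
  then show ?thesis unfolding cg_def by (metis add.right_neutral mult_zero_right)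
qed

lemma phi_mul: "cg n (Fp D) (phi (qmul n D x y)) (phi x * phi y)"
proof -
  obtain a b where x: "x = (a, b)" by force
  obtain c d where y: "y = (c, d)" by force
  show ?thesis
  proof (cases "D mod 4 = 1")
    case True
    have "phi x * phi y = phi (a * c + b * d * ((D - 1) div 4), a * d + b * c + b * d) + Fp D * [:b * d:]"
      unfolding x y phi_def Fp_def using True by (simp add: algebra_simps)
    then have H: "cg n (Fp D) (phi x * phi y) (phi (a * c + b * d * ((D - 1) div 4), a * d + b * c + b * d))"
      unfolding cg_def by (metis add_diff_cancel_left' add_0 smult_0_right add.commute)
    then show ?thesis using cg_trans[OF phi_red cg_sym[OF H]] True by (simp add: x y qmul_def)
  next
    case False
    have "phi x * phi y = phi (a * c + D * b * d, a * d + b * c) + Fp D * [:b * d:]"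
      unfolding x y phi_def Fp_def using False by (simp add: algebra_simps)
    then have H: "cg n (Fp D) (phi x * phi y) (phi (a * c + D * b * d, a * d + b * c))"
      unfolding cg_def by (metis add_diff_cancel_left' add_0 smult_0_right add.commute)
    then show ?thesis using cg_trans[OF phi_red cg_sym[OF H]] False by (simp add: x y qmul_def)
  qed
qed

lemma phi_one: "cg n F (phi (qone n)) 1"
  unfolding qone_def using phi_red[of n F "(1,0)"] by (simp add: phi_def one_pCons)

lemma phi_pow: "cg n (Fp D) (phi (qpow n D x m)) (phi x ^ m)"
proof (induction m)
  case 0 then show ?case using phi_one by simp
next
  case (Suc m)
  then show ?case using cg_trans[OF phi_mul cg_mult[OF cg_refl Suc.IH]] by simp
qed

lemma phi_add: "cg n F (phi (qadd n x y)) (phi x + phi y)"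
  unfolding qadd_def using phi_red[of n F "(fst x + fst y, snd x + snd y)"]
  by (simp add: phi_def)

lemma phi_smult: "cg n F (phi (qsmult n c x)) ([:c:] * phi x)"
  unfolding qsmult_def using phi_red[of n F "(c * fst x, c * snd x)"]
  by (simp add: phi_def mult.commute)



lemma lin_cg0:
  fixes n :: int
  assumes n: "n > 0" and dF: "degree F = 2" and lF: "lead_coeff F = 1"
    and h: "cg n F [:e, f:] 0"
  shows "n dvd e \<and> n dvd f"
proof -
  obtain A B where AB: "[:e, f:] = smult n A + F * B" using h unfolding cg_def by auto
  define B1 where "B1 = map_poly (\<lambda>x. x div n) B"
  define B2 where "B2 = map_poly (\<lambda>x. x mod n) B"
  have cB1: "coeff B1 i = coeff B i div n" for i unfolding B1_def by (simp add: coeff_map_poly)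
  have cB2: "coeff B2 i = coeff B i mod n" for i unfolding B2_def by (simp add: coeff_map_poly)
  have BB: "B = smult n B1 + B2"
    by (rule poly_eqI) (simp add: cB1 cB2)
  have E: "[:e, f:] - F * B2 = smult n (A + F * B1)"
    using AB unfolding BB by (simp add: algebra_simps smult_add_right)
  have B20: "B2 = 0"
  proof (rule ccontr)
    assume ne: "B2 \<noteq> 0"
    define d where "d = degree B2"
    have lc: "lead_coeff B2 \<noteq> 0" using ne by simp
    have lc2: "0 \<le> lead_coeff B2" "lead_coeff B2 < n" using cB2 n by auto
    have "F \<noteq> 0" using dF by auto
    then have dFB: "degree (F * B2) = d + 2" using ne dF d_def by (simp add: degree_mult_eq)
    have "lead_coeff (F * B2) = lead_coeff B2" using lF by (simp add: lead_coeff_mult)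
    then have c1: "coeff (F * B2) (d + 2) = lead_coeff B2" using dFB by simp
    have "coeff ([:e, f:] - F * B2) (d + 2) = n * coeff (A + F * B1) (d + 2)"
      using E by simp
    moreover have "coeff ([:e, f:] - F * B2) (d + 2) = - lead_coeff B2"
      using c1 by (simp add: coeff_pCons split: nat.splits)
    ultimately have "n dvd lead_coeff B2"
      by (metis dvd_minus_iff dvd_triv_left)
    then show False using lc lc2 zdvd_imp_le by fastforce
  qed
  have "coeff [:e, f:] 0 = n * coeff (A + F * B1) 0" "coeff [:e, f:] 1 = n * coeff (A + F * B1) 1"
    using E B20 by (metis coeff_smult diff_zero mult_zero_right)+
  then show ?thesis by simp
qed

lemma Fp_deg: "degree (Fp D) = 2" and Fp_lc: "lead_coeff (Fp D) = 1"
  by (auto simp: Fp_def)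

definition red :: "int \<Rightarrow> int \<times> int \<Rightarrow> bool" where
  "red n x \<longleftrightarrow> 0 \<le> fst x \<and> fst x < n \<and> 0 \<le> snd x \<and> snd x < n"

lemma red_eq: "0 \<le> (a::int) \<Longrightarrow> a < n \<Longrightarrow> 0 \<le> c \<Longrightarrow> c < n \<Longrightarrow> n dvd a - c \<Longrightarrow> a = c"
  by (metis mod_eq_dvd_iff mod_pos_pos_trivial)

lemma phi_inj:
  assumes n: "n > 0" and rx: "red n x" and ry: "red n y" and h: "cg n (Fp D) (phi x) (phi y)"
  shows "x = y"
proof -
  have "cg n (Fp D) [:fst x - fst y, snd x - snd y:] 0"
    using h cg_iff0[of n "Fp D" "phi x" "phi y"] by (simp add: phi_def)
  then have "n dvd fst x - fst y \<and> n dvd snd x - snd y"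
    using lin_cg0[OF n Fp_deg Fp_lc] by blast
  then show ?thesis using rx ry red_eq unfolding red_def by (metis prod.expand)
qed

lemma lin_cg0_iff:
  assumes n: "n > 0" 
  shows "cg n (Fp D) [:e, f:] 0 \<longleftrightarrow> n dvd e \<and> n dvd f"
proof
  assume "cg n (Fp D) [:e, f:] 0" then show "n dvd e \<and> n dvd f" using lin_cg0[OF n Fp_deg Fp_lc] by blast
next
  assume "n dvd e \<and> n dvd f"
  then obtain e' f' where "e = n * e'" "f = n * f'" by (auto elim!: dvdE)
  then have "[:e, f:] = smult n [:e', f':]" by simp
  then show "cg n (Fp D) [:e, f:] 0" using cg_smult_n by metis
qed

lemma red_qnorm: "n > 0 \<Longrightarrow> red n (qnorm_red n x)"
  by (simp add: red_def qnorm_red_def)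

lemma red_qmul: "n > 0 \<Longrightarrow> red n (qmul n D x y)"
  by (simp add: qmul_def red_qnorm split: prod.splits)

lemma red_qpow: "n > 0 \<Longrightarrow> red n (qpow n D x m)"
  by (cases m) (simp_all add: qone_def red_qnorm red_qmul)

lemma red_foldr: "n > 0 \<Longrightarrow> red n z \<Longrightarrow> red n (foldr (qadd n) xs z)"
  by (induction xs) (simp_all add: qadd_def red_qnorm)

lemma red_qpoly_eval: "n > 0 \<Longrightarrow> red n (qpoly_eval n D f x)"
  unfolding qpoly_eval_def by (rule red_foldr) (simp_all add: red_qnorm)

definition nrm :: "int \<Rightarrow> int \<times> int \<Rightarrow> int" where
  "nrm D x = (if D mod 4 = 1 then fst x ^ 2 + fst x * snd x - ((D - 1) div 4) * snd x ^ 2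
              else fst x ^ 2 - D * snd x ^ 2)"

definition qcnj :: "int \<Rightarrow> int \<times> int \<Rightarrow> int \<times> int" where
  "qcnj D x = (if D mod 4 = 1 then (fst x + snd x, - snd x) else (fst x, - snd x))"

lemma cnj_mult: "phi (qcnj D x) * phi x = [:nrm D x:] + Fp D * [:- (snd x ^ 2):]"
  by (auto simp: phi_def qcnj_def nrm_def Fp_def algebra_simps power2_eq_square)

lemma cg_cnj_mult: "cg n (Fp D) (phi (qcnj D x) * phi x) [:nrm D x:]"
  unfolding cnj_mult cg_def by (rule exI[of _ 0], rule exI[of _ "[:- (snd x ^ 2):]"]) simp

lemma QR_lemma:
  fixes n :: int
  assumes p: "prime n" and b: "\<not> n dvd b" and h: "n dvd a ^ 2 - D * b ^ 2"
  shows "QuadRes n D"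
proof -
  have "coprime b n" using b p by (metis coprime_commute prime_imp_coprime)
  then obtain b' where bb: "[b * b' = 1] (mod n)" using cong_solve_coprime_int by blast
  have "[a ^ 2 = D * b ^ 2] (mod n)" using h by (simp add: cong_iff_dvd_diff)
  then have "[a ^ 2 * b' ^ 2 = D * b ^ 2 * b' ^ 2] (mod n)" by (simp add: cong_mult)
  moreover have "D * b ^ 2 * b' ^ 2 = D * (b * b') ^ 2" by (simp add: power_mult_distrib)
  moreover have "[D * (b * b') ^ 2 = D * 1 ^ 2] (mod n)" using cong_mult[OF cong_refl[of D] cong_pow[OF bb, of 2]] by simp
  ultimately have "[(a * b') ^ 2 = D] (mod n)"
    by (metis (no_types, lifting) cong_trans mult.right_neutral power_mult_distrib power_one)
  then show ?thesis unfolding QuadRes_def by blast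
qed

lemma D14: "D mod 4 = 1 \<Longrightarrow> (D::int) = 4 * ((D - 1) div 4) + 1"
  by presburger

lemma nrm_nonzero:
  fixes n :: int
  assumes p: "prime n" and odd: "odd n" and L: "Legendre D n = -1"
    and nz: "\<not> (n dvd fst x \<and> n dvd snd x)"
  shows "\<not> n dvd nrm D x"
proof
  assume dv: "n dvd nrm D x"
  obtain a b where x: "x = (a, b)" by force
  have nQR: "\<not> QuadRes n D" using L unfolding Legendre_def by (auto split: if_splits)
  show False
  proof (cases "D mod 4 = 1")
    case False
    then have dv1: "n dvd a ^ 2 - D * b ^ 2" using dv x by (simp add: nrm_def)
    show False
    proof (cases "n dvd b")
      case True
      then have "n dvd D * b ^ 2" by (simp add: power2_eq_square)
      then have "n dvd (a ^ 2 - D * b ^ 2) + D * b ^ 2" using dv1 dvd_add by blast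
      then have "n dvd a ^ 2" by simp
      then have "n dvd a" using p prime_dvd_power by blast
      then show False using nz x True by simp
    next
      case False
      then show False using QR_lemma[OF p False dv1] nQR by blast
    qed
  next
    case True
    define t where "t = (D - 1) div 4"
    have Dt: "D = 4 * t + 1" using D14[OF True] t_def by simp
    have e4: "4 * nrm D x = (2 * a + b) ^ 2 - D * b ^ 2"
      using True x unfolding nrm_def t_def[symmetric] Dt by (simp add: algebra_simps power2_eq_square)
    have "n dvd 4 * nrm D x" using dv by simp
    then have dv1: "n dvd (2 * a + b) ^ 2 - D * b ^ 2" using e4 by simp
    show False
    proof (cases "n dvd b")
      case True
      then have "n dvd D * b ^ 2" by (simp add: power2_eq_square)
      then have "n dvd ((2 * a + b) ^ 2 - D * b ^ 2) + D * b ^ 2" using dv1 dvd_add by blast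
      then have "n dvd (2 * a + b) ^ 2" by simp
      then have "n dvd 2 * a + b" using p prime_dvd_power by blast
      then have "n dvd (2 * a + b) - b" using True dvd_diff by blast
      then have "n dvd 2 * a" by simp
      moreover have "\<not> n dvd 2"
      proof
        assume "n dvd 2"
        then have "n \<le> 2" using zdvd_imp_le by simp
        moreover have "n \<ge> 2" using p prime_ge_2_int by blast
        ultimately have "n = 2" by simp
        then show False using odd by simp
      qed
      ultimately have "n dvd a" using p prime_dvd_mult_iff by blast
      then show False using nz x True by simp
    next
      case False
      then show False using QR_lemma[OF p False dv1] nQR by blast
    qed
  qed
qed

lemma domain_lemma:
  fixes n :: int
  assumes p: "prime n" and odd: "odd n" and L: "Legendre D n = -1"
    and nz: "\<not> (n dvd fst x \<and> n dvd snd x)"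
    and h: "cg n (Fp D) (phi x * phi y) 0"
  shows "n dvd fst y \<and> n dvd snd y"
proof -
  have n0: "n > 0" using p prime_gt_0_int by blast
  have "cg n (Fp D) (phi (qcnj D x) * (phi x * phi y)) (phi (qcnj D x) * 0)"
    using cg_mult[OF cg_refl h] .
  then have "cg n (Fp D) ((phi (qcnj D x) * phi x) * phi y) 0" by (simp add: mult.assoc)
  moreover have "cg n (Fp D) ((phi (qcnj D x) * phi x) * phi y) ([:nrm D x:] * phi y)"
    using cg_mult[OF cg_cnj_mult cg_refl] .
  ultimately have "cg n (Fp D) ([:nrm D x:] * phi y) 0" using cg_trans cg_sym by blast
  then have "cg n (Fp D) [:nrm D x * fst y, nrm D x * snd y:] 0" by (simp add: phi_def mult.commute)
  then have "n dvd nrm D x * fst y \<and> n dvd nrm D x * snd y" using lin_cg0_iff[OF n0] by blast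
  moreover have "\<not> n dvd nrm D x" using nrm_nonzero[OF p odd L nz] .
  ultimately show ?thesis using p prime_dvd_mult_iff by blast
qed



lemmas cg_trans_rule[trans] = cg_trans

lemma cg_frob:
  assumes "prime N"
  shows "cg (int N) F ((P + Q) ^ N) (P ^ N + Q ^ N)"
proof -
  obtain r where r: "(P + Q) ^ N = P ^ N + Q ^ N + of_nat N * r" using frob_ex[OF assms] by blast
  have "(of_nat N :: int poly) * r = smult (int N) r" by (simp add: of_nat_poly)
  then have "(P + Q) ^ N - (P ^ N + Q ^ N) = smult (int N) r + F * 0" using r by simp
  then show ?thesis unfolding cg_def by blast
qed

lemma cg_const: "[a = b] (mod n) \<Longrightarrow> cg n F [:a:] [:b:]"
proof -
  assume "[a = b] (mod n)"
  then have "n dvd a - b" by (simp add: cong_iff_dvd_diff)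
  then obtain k where "a - b = n * k" by (auto elim!: dvdE)
  then have "[:a:] - [:b:] = smult n [:k:] + F * 0" by simp
  then show ?thesis unfolding cg_def by blast
qed

lemma cg_lin: "[a = a'] (mod n) \<Longrightarrow> [b = b'] (mod n) \<Longrightarrow> cg n F [:a, b:] [:a', b':]"
proof -
  assume "[a = a'] (mod n)" "[b = b'] (mod n)"
  then have "n dvd a - a'" "n dvd b - b'" by (simp_all add: cong_iff_dvd_diff)
  then obtain k l where "a - a' = n * k" "b - b' = n * l" by (auto elim!: dvdE)
  then have "[:a, b:] - [:a', b':] = smult n [:k, l:] + F * 0" by simp
  then show ?thesis unfolding cg_def by blast
qed

lemma cg_const_pow:
  assumes "prime N" "odd N"
  shows "cg (int N) F ([:a:] ^ N) [:a:]"
proof -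
  have "[a ^ N = a] (mod int N)" using fermat_int[OF assms] by (simp add: cong_iff_dvd_diff)
  then show ?thesis using cg_const by (simp add: poly_const_pow)
qed

lemma N_Suc:
  assumes "odd (N::nat)" shows "N = Suc (2 * ((N - 1) div 2))"
  using assms by presburger

lemma half_pow_cg:
  assumes prime: "prime N" and odd: "odd N" and L: "Legendre D (int N) = -1"
    and Y2: "cg (int N) F (Y ^ 2) [:D:]"
  shows "cg (int N) F (Y ^ N) (- Y)"
proof -
  define h where "h = (N - 1) div 2"
  have NS: "N = Suc (2 * h)" using N_Suc[OF odd] h_def by simp
  have N2: "2 < N" using prime odd prime_ge_2_nat by (metis le_neq_implies_less even_numeral)
  have E: "[Legendre D (int N) = D ^ ((N - 1) div 2)] (mod int N)"
    using euler_criterion[OF prime N2] .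
  then have E2: "[D ^ h = -1] (mod int N)" using L h_def by (simp add: cong_sym)
  have "Y ^ N = Y * (Y ^ 2) ^ h" unfolding NS by (simp add: power_mult)
  also have "cg (int N) F (Y * (Y ^ 2) ^ h) (Y * [:D:] ^ h)"
    by (rule cg_mult[OF cg_refl cg_pow[OF Y2]])
  also have "Y * [:D:] ^ h = Y * [:D ^ h:]" by (simp add: poly_const_pow)
  also have "cg (int N) F (Y * [:D ^ h:]) (Y * [:-1:])"
    by (rule cg_mult[OF cg_refl cg_const[OF E2]])
  also have "Y * [:-1:] = - Y" by (simp add: mult.commute)
  finally show ?thesis .
qed

abbreviation XX :: "int poly" where "XX \<equiv> [:0, 1:]"

lemma X_pow:
  assumes prime: "prime N" and odd: "odd N" and L: "Legendre D (int N) = -1"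
  shows "cg (int N) (Fp D) (XX ^ N) (if D mod 4 = 1 then [:1, -1:] else [:0, -1:])"
proof (cases "D mod 4 = 1")
  case False
  have "XX ^ 2 - [:D:] = smult (int N) 0 + Fp D * 1"
    using False by (simp add: Fp_def power2_eq_square)
  then have "cg (int N) (Fp D) (XX ^ 2) [:D:]" unfolding cg_def by blast
  from half_pow_cg[OF prime odd L this] show ?thesis using False by simp
next
  case True
  define t where "t = (D - 1) div 4"
  have Dt: "D = 4 * t + 1" using D14[OF True] t_def by simp
  define Y where "Y = [:-1, 2:: int:]"
  have "Y ^ 2 - [:D:] = smult (int N) 0 + Fp D * [:4:]"
    using True unfolding Y_def Fp_def t_def[symmetric] by (simp add: power2_eq_square Dt)
  then have "cg (int N) (Fp D) (Y ^ 2) [:D:]" unfolding cg_def by blast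
  from half_pow_cg[OF prime odd L this] have Y1: "cg (int N) (Fp D) (Y ^ N) (- Y)" .
  have Yeq: "Y = [:-1:] + [:2:] * XX" unfolding Y_def by simp
  have Y2: "cg (int N) (Fp D) (Y ^ N) ([:-1:] + [:2:] * XX ^ N)"
  proof -
    have "cg (int N) (Fp D) (Y ^ N) ([:-1:] ^ N + ([:2:] * XX) ^ N)"
      by (subst Yeq) (rule cg_frob[OF prime])
    also have "[:-1:] ^ N + ([:2:] * XX) ^ N = [:-1:] ^ N + [:2:] ^ N * XX ^ N"
      by (simp only: power_mult_distrib)
    also have "cg (int N) (Fp D) ([:-1:] ^ N + [:2:] ^ N * XX ^ N) ([:-1:] + [:2:] * XX ^ N)"
      by (intro cg_add cg_mult cg_refl cg_const_pow[OF prime odd])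
    finally show ?thesis .
  qed
  have Z: "cg (int N) (Fp D) ([:2:] * XX ^ N) [:2, -2:]"
  proof -
    have "[:2:] * XX ^ N = ([:-1:] + [:2:] * XX ^ N) - [:-1:]" by simp
    also have "cg (int N) (Fp D) (([:-1:] + [:2:] * XX ^ N) - [:-1:]) (Y ^ N - [:-1:])"
      by (rule cg_diff[OF cg_sym[OF Y2] cg_refl])
    also have "cg (int N) (Fp D) (Y ^ N - [:-1:]) (- Y - [:-1:])"
      by (rule cg_diff[OF Y1 cg_refl])
    also have "- Y - [:-1:] = [:2, -2:]" unfolding Y_def by simp
    finally show ?thesis .
  qed
  define h2 where "h2 = (int N + 1) div 2"
  have "odd (int N)" using odd by simp
  then have h2e: "2 * h2 = int N + 1" unfolding h2_def by presburger
  have c1: "[2 * h2 = 1] (mod int N)" unfolding h2e by (simp add: cong_iff_dvd_diff)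
  have "XX ^ N = [:1:] * XX ^ N" by simp
  also have "cg (int N) (Fp D) ([:1:] * XX ^ N) ([:2 * h2:] * XX ^ N)"
    by (rule cg_mult[OF cg_const[OF cong_sym[OF c1]] cg_refl])
  also have "[:2 * h2:] * XX ^ N = [:h2:] * ([:2:] * XX ^ N)" by (simp add: algebra_simps)
  also have "cg (int N) (Fp D) ([:h2:] * ([:2:] * XX ^ N)) ([:h2:] * [:2, -2:])"
    by (rule cg_mult[OF cg_refl Z])
  also have "[:h2:] * [:2, -2:] = [:2 * h2, - (2 * h2):]" by simp
  also have "cg (int N) (Fp D) [:2 * h2, - (2 * h2):] [:1, -1:]"
  proof -
    have "[- (2 * h2) = -1] (mod int N)" using c1 cong_minus_minus_iff by blast
    with c1 show ?thesis by (rule cg_lin)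
  qed
  finally have "cg (int N) (Fp D) (XX ^ N) [:1, -1:]" .
  then show ?thesis using True by simp
qed

lemma phi_pow_N:
  assumes prime: "prime N" and odd: "odd N" and L: "Legendre D (int N) = -1"
  shows "cg (int N) (Fp D) (phi x ^ N) (phi (qcnj D x))"
proof -
  obtain a b where x: "x = (a, b)" by force
  have peq: "phi x = [:a:] + [:b:] * XX" unfolding x phi_def by simp
  have "cg (int N) (Fp D) (phi x ^ N) ([:a:] ^ N + ([:b:] * XX) ^ N)"
    by (subst peq) (rule cg_frob[OF prime])
  also have "[:a:] ^ N + ([:b:] * XX) ^ N = [:a:] ^ N + [:b:] ^ N * XX ^ N" by (simp only: power_mult_distrib)
  also have "cg (int N) (Fp D) ([:a:] ^ N + [:b:] ^ N * XX ^ N)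
     ([:a:] + [:b:] * (if D mod 4 = 1 then [:1, -1:] else [:0, -1:]))"
    by (intro cg_add cg_mult cg_refl cg_const_pow[OF prime odd] X_pow[OF prime odd L])
  also have "[:a:] + [:b:] * (if D mod 4 = 1 then [:1, -1:] else [:0, -1:]) = phi (qcnj D x)"
    unfolding x phi_def qcnj_def by simp
  finally show ?thesis .
qed

lemma D14': "D mod 4 = 1 \<Longrightarrow> (1 - D) div 4 = - ((D - 1) div (4::int))"
  by presburger

lemma qG_nrm: "w \<in> qG n D \<Longrightarrow> [nrm D w = 1] (mod n)"
  unfolding qG_def nrm_def by (auto simp: D14')

lemma phi_pow_N1:
  assumes prime: "prime N" and odd: "odd N" and L: "Legendre D (int N) = -1"
    and w: "w \<in> qG (int N) D"
  shows "cg (int N) (Fp D) (phi w ^ (N + 1)) 1"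
proof -
  have "phi w ^ (N + 1) = phi w ^ N * phi w" by simp
  also have "cg (int N) (Fp D) (phi w ^ N * phi w) (phi (qcnj D w) * phi w)"
    by (rule cg_mult[OF phi_pow_N[OF prime odd L] cg_refl])
  also have "cg (int N) (Fp D) (phi (qcnj D w) * phi w) [:nrm D w:]" by (rule cg_cnj_mult)
  also have "cg (int N) (Fp D) [:nrm D w:] [:1:]" by (rule cg_const[OF qG_nrm[OF w]])
  also have "[:1:] = (1 :: int poly)" by (simp add: one_pCons)
  finally show ?thesis .
qed



lemma phi_foldr: "cg n F (phi (foldr (qadd n) xs z)) (sum_list (map phi xs) + phi z)"
proof (induction xs)
  case Nil then show ?case by simp
next
  case (Cons x xs)
  have "phi (foldr (qadd n) (x # xs) z) = phi (qadd n x (foldr (qadd n) xs z))" by simp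
  also have "cg n F (phi (qadd n x (foldr (qadd n) xs z))) (phi x + phi (foldr (qadd n) xs z))"
    by (rule phi_add)
  also have "cg n F (phi x + phi (foldr (qadd n) xs z)) (phi x + (sum_list (map phi xs) + phi z))"
    by (rule cg_add[OF cg_refl Cons.IH])
  also have "phi x + (sum_list (map phi xs) + phi z) = sum_list (map phi (x # xs)) + phi z"
    by (simp add: add.assoc)
  finally show ?case .
qed

lemma phi_qpoly_eval:
  "cg n (Fp D) (phi (qpoly_eval n D f x)) (\<Sum>i<Suc (degree f). [:coeff f i:] * phi x ^ i)"
proof -
  define g where "g = (\<lambda>i. qsmult n (coeff f i) (qpow n D x i))"
  have "phi (qpoly_eval n D f x) = phi (foldr (qadd n) (map g [0..<Suc (degree f)]) (qnorm_red n (0, 0)))"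
    unfolding qpoly_eval_def g_def by simp
  also have "cg n (Fp D) (phi (foldr (qadd n) (map g [0..<Suc (degree f)]) (qnorm_red n (0, 0))))
     (sum_list (map phi (map g [0..<Suc (degree f)])) + phi (qnorm_red n (0, 0)))"
    by (rule phi_foldr)
  also have "sum_list (map phi (map g [0..<Suc (degree f)])) = (\<Sum>i<Suc (degree f). phi (g i))"
    using sum_set_upt_conv_sum_list_nat[of "\<lambda>i. phi (g i)" 0 "Suc (degree f)"]
    by (simp add: atLeast0LessThan o_def)
  also have "cg n (Fp D) ((\<Sum>i<Suc (degree f). phi (g i)) + phi (qnorm_red n (0, 0)))
      ((\<Sum>i<Suc (degree f). [:coeff f i:] * phi x ^ i) + phi (0, 0))"
  proof (rule cg_add[OF cg_sum phi_red])
    fix i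
    have "cg n (Fp D) (phi (g i)) ([:coeff f i:] * phi (qpow n D x i))"
      unfolding g_def by (rule phi_smult)
    also have "cg n (Fp D) ([:coeff f i:] * phi (qpow n D x i)) ([:coeff f i:] * phi x ^ i)"
      by (rule cg_mult[OF cg_refl phi_pow])
    finally show "cg n (Fp D) (phi (g i)) ([:coeff f i:] * phi x ^ i)" .
  qed
  also have "phi (0, 0) = 0" by (simp add: phi_def)
  finally show ?thesis by simp
qed

definition Cp :: "nat \<Rightarrow> int poly" where
  "Cp p = (\<Sum>i<p. monom 1 i)"

lemma coeff_Cp: "coeff (Cp p) i = (if i < p then 1 else 0)"
  unfolding Cp_def coeff_sum by (simp add: coeff_monom)

lemma degree_Cp: "p > 0 \<Longrightarrow> degree (Cp p) = p - 1"
proof -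
  assume p: "p > 0"
  have "degree (Cp p) \<le> p - 1"
    unfolding Cp_def by (rule degree_sum_le) (auto intro: order.trans[OF degree_monom_le])
  moreover have "coeff (Cp p) (p - 1) \<noteq> 0" using p by (simp add: coeff_Cp)
  then have "p - 1 \<le> degree (Cp p)" by (rule le_degree)
  ultimately show ?thesis by simp
qed

lemma phi_qpoly_eval_Cp:
  assumes "p > 0"
  shows "cg n (Fp D) (phi (qpoly_eval n D (Cp p) x)) (\<Sum>i<p. phi x ^ i)"
proof -
  have "Suc (degree (Cp p)) = p" using degree_Cp[OF assms] assms by simp
  then show ?thesis using phi_qpoly_eval[of n D "Cp p" x] by (simp add: coeff_Cp one_pCons)
qed

lemma map_poly_of_int_inj:
  "map_poly (of_int :: int \<Rightarrow> complex) q = map_poly of_int r \<Longrightarrow> q = r"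
proof -
  assume h: "map_poly (of_int :: int \<Rightarrow> complex) q = map_poly of_int r"
  show "q = r"
  proof (rule poly_eqI)
    fix i
    have "coeff (map_poly (of_int :: int \<Rightarrow> complex) q) i = coeff (map_poly of_int r) i" using h by simp
    then have "(of_int (coeff q i) :: complex) = of_int (coeff r i)" by (simp add: coeff_map_poly)
    then show "coeff q i = coeff r i" by simp
  qed
qed

lemma map_poly_of_int_inj2:
  "map_poly (of_int :: int \<Rightarrow> complex) q = X \<Longrightarrow> map_poly of_int r = X \<Longrightarrow> q = r"
  using map_poly_of_int_inj by metis

lemma cyclotomic_prime:
  assumes p: "prime p"
  shows "cyclotomic p = Cp p"
proof -
  have p0: "p > 0" "p > 1" using prime_gt_1_nat[OF p] by auto
  define z where "z = (\<lambda>k. cis (2 * pi * real k / real p))"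
  have S: "{k\<in>{1..p}. coprime k p} = {1..<p}"
  proof safe
    fix k assume "k \<in> {1..p}" "coprime k p"
    moreover have "\<not> coprime p p" using p0 by simp
    ultimately show "k \<in> {1..<p}" by (metis atLeastAtMost_iff atLeastLessThan_iff le_neq_implies_less)
  next
    fix k assume k: "k \<in> {1..<p}"
    then have "\<not> p dvd k" by (auto dest: dvd_imp_le)
    then show "coprime k p" using prime_imp_coprime[OF p] by (simp add: coprime_commute)
  qed (auto)
  define Pc where "Pc = (\<Prod>k\<in>{1..<p}. [:- z k, 1:])"
  define Q where "Q = map_poly (of_int :: int \<Rightarrow> complex) (Cp p)"
  have cQ: "coeff Q i = (if i < p then 1 else 0)" for i
    unfolding Q_def by (simp add: coeff_map_poly coeff_Cp)
  have dQ: "degree Q \<le> p - 1"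
    by (rule degree_le) (auto simp: cQ)
  have dPc: "degree Pc = p - 1"
    unfolding Pc_def by (subst degree_prod_sum_eq) auto
  have lPc: "lead_coeff Pc = 1"
    unfolding Pc_def by (simp add: lead_coeff_prod)
  have bij: "bij_betw z {..<p} {w. w ^ p = 1}" unfolding z_def by (rule Complex.bij_betw_roots_unity[OF p0(1)])
  have inj: "inj_on z {..<p}" using bij bij_betw_def by blast
  have cardA: "card (z ` {1..<p}) = p - 1"
    using inj by (subst card_image) (auto intro: inj_on_subset)
  have "Pc = Q"
  proof (rule poly_eqI_degree_lead_coeff[of Pc "p - 1" Q "z ` {1..<p}"])
    show "coeff Pc (p - 1) = coeff Q (p - 1)" using lPc dPc cQ p0 by simp
    show "p - 1 \<le> card (z ` {1..<p})" using cardA by simp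
    show "degree Pc \<le> p - 1" using dPc by simp
    show "degree Q \<le> p - 1" by (rule dQ)
    fix w assume "w \<in> z ` {1..<p}"
    then obtain k where k: "k \<in> {1..<p}" "w = z k" by blast
    have "poly Pc w = 0" unfolding Pc_def poly_prod using k by (auto intro!: prod_zero)
    moreover have "poly Q w = 0"
    proof -
      have wp: "w ^ p = 1" using bij k unfolding bij_betw_def by auto
      have "z 0 = 1" unfolding z_def by simp
      have w1: "w \<noteq> 1"
      proof
        assume "w = 1"
        then have "z k = z 0" using k \<open>z 0 = 1\<close> by simp
        moreover have "k \<in> {..<p}" "0 \<in> {..<p}" using k p0 by auto
        ultimately have "k = 0" using inj unfolding inj_on_def by blast
        then show False using k by simp
      qed
      have "Q = (\<Sum>i<p. monom 1 i)"
        by (rule poly_eqI) (simp add: cQ coeff_sum coeff_monom)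
      then have "poly Q w = (\<Sum>i<p. w ^ i)"
        by (simp add: poly_sum poly_monom)
      then have "(w - 1) * poly Q w = w ^ p - 1" by (simp add: power_diff_1_eq)
      then have "(w - 1) * poly Q w = 0" using wp by simp
      then show ?thesis using w1 by simp
    qed
    ultimately show "poly Pc w = poly Q w" by simp
  qed
  have "map_poly of_int (Cp p) = Pc" using \<open>Pc = Q\<close> unfolding Q_def by simp
  then have M: "map_poly of_int (Cp p) = (\<Prod>k\<in>{k\<in>{1..p}. coprime k p}. [:- cis (2 * pi * real k / real p), 1:])"
    unfolding S Pc_def z_def .
  show ?thesis unfolding cyclotomic_def
  proof (rule the_equality)
    show "map_poly of_int (Cp p) = (\<Prod>k\<in>{k\<in>{1..p}. coprime k p}. [:- cis (2 * pi * real k / real p), 1:])"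
      by (rule M)
  next
    fix q assume "map_poly of_int q = (\<Prod>k\<in>{k\<in>{1..p}. coprime k p}. [:- cis (2 * pi * real k / real p), 1:])"
    then show "q = Cp p" using map_poly_of_int_inj2[OF _ M] by blast
  qed
qed



theorem theorem1p3:
  fixes D :: int and p k l c N :: nat and w :: "int \<times> int"
  assumes "squarefree D"
    and "prime p" and "odd p"
    and "k > 0" and "l > 0" and "c > 0"
    and "coprime (c * k) p"
    and "int N = int (c * k * p ^ l) - 1"
    and "prime N" and "odd N"
    and "Legendre D (int N) = -1"
    and "w \<in> qG (int N) D"
  shows "qpow (int N) D w (c * k) = qone (int N) \<or>
         (\<exists>j<l. qpoly_eval (int N) D (cyclotomic p) (qpow (int N) D w (c * k * p ^ j))
                 = qnorm_red (int N) (0, 0))"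
proof (cases "qpow (int N) D w (c * k) = qone (int N)")
  case True
  then show ?thesis by simp
next
  case False
  note primeN = assms(9) and oddN = assms(10) and L = assms(11) and wG = assms(12)
  note pp = assms(2)
  define n where "n = int N"
  define F where "F = Fp D"
  define W where "W = phi w"
  have N2: "N \<ge> 2" using primeN prime_ge_2_nat by blast
  have n0: "n > 0" using N2 n_def by simp
  have pn: "prime n" using primeN n_def by simp
  have on: "odd n" using oddN n_def by simp
  have Ln: "Legendre D n = -1" using L n_def by simp
  have ckN: "c * k * p ^ l = N + 1" using assms(8) by linarith
  have p0: "p > 0" using pp prime_gt_0_nat by blast
  have qone1: "qone n = (1, 0)" using N2 n_def by (simp add: qone_def qnorm_red_def)
  have red1: "red n (1, 0)" using N2 n_def by (simp add: red_def)
  have PW: "cg n F (phi (qpow n D w m)) (W ^ m)" for m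
    unfolding F_def W_def by (rule phi_pow)
  have One: "cg n F (W ^ (N + 1)) 1"
    unfolding F_def W_def n_def by (rule phi_pow_N1[OF primeN oddN L wG[folded n_def, unfolded n_def]])
  have ne: "qpow (int N) D w (c * k) \<noteq> qone (int N)" using False .
  define S where "S = {j. j \<le> l \<and> \<not> cg n F (W ^ (c * k * p ^ j)) 1}"
  have S0: "0 \<in> S"
  proof (rule ccontr)
    assume "0 \<notin> S"
    then have h: "cg n F (W ^ (c * k)) 1" unfolding S_def by simp
    have "cg n F (phi (qpow n D w (c * k))) (phi (qone n))"
      using cg_trans[OF PW[of "c * k"] cg_trans[OF h cg_sym[OF phi_one]]] .
    then have "qpow n D w (c * k) = qone n"
      using phi_inj[OF n0 red_qpow[OF n0] _] red1 qone1 unfolding F_def by metis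
    then show False using ne n_def by simp
  qed
  have finS: "finite S" unfolding S_def by simp
  define j where "j = Max S"
  have jS: "j \<in> S" using Max_in[OF finS] S0 j_def by blast
  have jl: "j \<le> l" using jS S_def by simp
  have jnl: "j \<noteq> l"
  proof
    assume "j = l"
    then have "\<not> cg n F (W ^ (c * k * p ^ l)) 1" using jS S_def by simp
    then show False using One ckN by simp
  qed
  then have jl2: "j < l" using jl by simp
  have "Suc j \<notin> S" using Max_ge[OF finS] j_def by fastforce
  then have cSj: "cg n F (W ^ (c * k * p ^ Suc j)) 1" using jl2 S_def by simp
  have nj: "\<not> cg n F (W ^ (c * k * p ^ j)) 1" using jS S_def by simp
  define v where "v = qpow n D w (c * k * p ^ j)"
  define V where "V = phi v"
  have Vc: "cg n F V (W ^ (c * k * p ^ j))" unfolding V_def v_def by (rule PW)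
  have Vp: "cg n F (V ^ p) 1"
  proof -
    have "cg n F (V ^ p) ((W ^ (c * k * p ^ j)) ^ p)" by (rule cg_pow[OF Vc])
    also have "(W ^ (c * k * p ^ j)) ^ p = W ^ (c * k * p ^ Suc j)"
    proof -
      have "c * k * p ^ j * p = c * k * p ^ Suc j" by simp
      then show ?thesis by (metis power_mult)
    qed
    also have "cg n F (W ^ (c * k * p ^ Suc j)) 1" by (rule cSj)
    finally show ?thesis .
  qed
  define s where "s = qpoly_eval n D (cyclotomic p) v"
  have sC: "cg n F (phi s) (\<Sum>i<p. V ^ i)"
    unfolding s_def V_def F_def cyclotomic_prime[OF pp] by (rule phi_qpoly_eval_Cp[OF p0])
  have V1: "phi (fst v - 1, snd v) = V - 1"
    unfolding V_def phi_def by (simp add: one_pCons)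
  have prod0: "cg n F (phi (fst v - 1, snd v) * phi s) 0"
  proof -
    have "cg n F (phi (fst v - 1, snd v) * phi s) ((V - 1) * (\<Sum>i<p. V ^ i))"
      unfolding V1 by (rule cg_mult[OF cg_refl sC])
    also have "(V - 1) * (\<Sum>i<p. V ^ i) = V ^ p - 1" by (simp add: power_diff_1_eq)
    also have "cg n F (V ^ p - 1) (1 - 1)" by (rule cg_diff[OF Vp cg_refl])
    also have "(1 :: int poly) - 1 = 0" by simp
    finally show ?thesis .
  qed
  have nz: "\<not> (n dvd fst (fst v - 1, snd v) \<and> n dvd snd (fst v - 1, snd v))"
  proof
    assume "n dvd fst (fst v - 1, snd v) \<and> n dvd snd (fst v - 1, snd v)"
    then have "cg n F [:fst v - 1, snd v:] 0" using lin_cg0_iff[OF n0] F_def by simp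
    then have "cg n F (V - 1) 0" using V1 by (simp add: phi_def)
    then have "cg n F (V - 1 + 1) (0 + 1)" by (rule cg_add[OF _ cg_refl])
    then have "cg n F V 1" by simp
    then have "cg n F (W ^ (c * k * p ^ j)) 1" by (rule cg_trans[OF cg_sym[OF Vc]])
    then show False using nj by simp
  qed
  have d: "n dvd fst s \<and> n dvd snd s"
    using domain_lemma[OF pn on Ln nz] prod0 F_def by simp
  have r: "red n s" unfolding s_def by (rule red_qpoly_eval[OF n0])
  have "fst s = 0" using red_eq[of "fst s" n 0] r d n0 unfolding red_def by simp
  moreover have "snd s = 0" using red_eq[of "snd s" n 0] r d n0 unfolding red_def by simp
  ultimately have "s = (0, 0)" by (simp add: prod_eq_iff)
  moreover have "qnorm_red n (0, 0) = (0, 0)" by (simp add: qnorm_red_def)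
  ultimately have "qpoly_eval n D (cyclotomic p) (qpow n D w (c * k * p ^ j)) = qnorm_red n (0, 0)"
    using s_def v_def by simp
  then show ?thesis using jl2 n_def by blast
qed

end
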